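(* Let $\alpha\in\mathbb T$ and let $\mathcal V_\alpha:L^2(\mu)\to L^2(\mu_\alpha)$ be a unitary operator with $\mathcal V_\alpha U_\alpha=M_z\mathcal V_\alpha$ and $\mathcal V_\alpha\mathbf 1=\mathbf 1$. Then for all $f\in C^1(\mathbb T)$, $$\mathcal V_\alpha f(z)=f(z)+(1-\alpha)\int_{\mathbb T}\frac{f(\xi)-f(z)}{1-\overline\xi z}\,d\mu(\xi)\qquad(\mu_\alpha\text{-a.e. }z),$$ where the integrand at $\xi=z$ is defined by continuity.
   Context: $\mathbb T=\{z\in\mathbb C:|z|=1\}$. Let $\mu$ be a Borel probability measure on $\mathbb T$, $U=M_\xi$ multiplication by the independent variable $\xi$ on $L^2(\mu)$, $b=\mathbf 1$ and $b_1=U^*b$ (so $b_1(\xi)=\overline\xi$). For $\alpha\in\mathbb C$ put $U_\alpha=U+(\alpha-1)(\,\cdot\,,b_1)_{L^2(\mu)}b$, i.e. $(U_\alpha f)(\xi)=\xi f(\xi)+(\alpha-1)\int_{\mathbb T}f(\zeta)\zeta\,d\mu(\zeta)$. For $\alpha\in\mathbb T$, $U_\alpha$ is unitary with $*$-cyclic vector $b$, and $\mu_\alpha$ denotes its spectral measure with respect to $b$, i.e. the probability measure on $\mathbb T$ with $\int_{\mathbb T}z^n\,d\mu_\alpha(z)=(U_\alpha^nb,b)_{L^2(\mu)}$ for all $n\in\mathbb Z$. $M_z$ denotes multiplication by the independent variable $z$ on $L^2(\mu_\alpha)$. *)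

theory Defs
  imports "HOL-Analysis.Analysis" "HOL-Probability.Probability"
begin

definition circle_measure :: "complex measure \<Rightarrow> bool" where
  "circle_measure M \<longleftrightarrow> prob_space M \<and> sets M = sets (restrict_space borel (sphere (0::complex) 1))"

text \<open>Representatives of elements of L2(M).\<close>
definition L2 :: "complex measure \<Rightarrow> (complex \<Rightarrow> complex) \<Rightarrow> bool" where
  "L2 M f \<longleftrightarrow> f \<in> borel_measurable M \<and> integrable M (\<lambda>x. (norm (f x))\<^sup>2)"

definition L2_inner :: "complex measure \<Rightarrow> (complex \<Rightarrow> complex) \<Rightarrow> (complex \<Rightarrow> complex) \<Rightarrow> complex" where
  "L2_inner M f g = (LINT x|M. f x * cnj (g x))"

text \<open>The rank-one perturbation U_alpha f = U f + (alpha - 1) (f, b1) b, with b = 1, b1(xi) = cnj xi.\<close>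
definition U_alpha :: "complex measure \<Rightarrow> complex \<Rightarrow> (complex \<Rightarrow> complex) \<Rightarrow> (complex \<Rightarrow> complex)" where
  "U_alpha M \<alpha> f = (\<lambda>\<xi>. \<xi> * f \<xi> + (\<alpha> - 1) * (LINT \<zeta>|M. f \<zeta> * \<zeta>))"

definition unitary_L2 :: "complex measure \<Rightarrow> complex measure \<Rightarrow> ((complex \<Rightarrow> complex) \<Rightarrow> (complex \<Rightarrow> complex)) \<Rightarrow> bool" where
  "unitary_L2 M N V \<longleftrightarrow>
     (\<forall>f. L2 M f \<longrightarrow> L2 N (V f)) \<and>
     (\<forall>f g. L2 M f \<longrightarrow> L2 M g \<longrightarrow> (AE x in M. f x = g x) \<longrightarrow> (AE z in N. V f z = V g z)) \<and>
     (\<forall>f g a b. L2 M f \<longrightarrow> L2 M g \<longrightarrow>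
        (AE z in N. V (\<lambda>x. a * f x + b * g x) z = a * V f z + b * V g z)) \<and>
     (\<forall>f g. L2 M f \<longrightarrow> L2 M g \<longrightarrow> L2_inner N (V f) (V g) = L2_inner M f g) \<and>
     (\<forall>h. L2 N h \<longrightarrow> (\<exists>f. L2 M f \<and> (AE z in N. V f z = h z)))"

definition dq :: "(complex \<Rightarrow> complex) \<Rightarrow> complex \<Rightarrow> complex \<Rightarrow> complex" where
  "dq f z \<xi> = (if \<xi> = z then Lim (at z within sphere 0 1) (\<lambda>w. (f w - f z) / (1 - cnj w * z))
               else (f \<xi> - f z) / (1 - cnj \<xi> * z))"

definition C1_circle :: "(complex \<Rightarrow> complex) \<Rightarrow> bool" where
  "C1_circle f \<longleftrightarrow> (\<lambda>t. f (cis t)) C1_differentiable_on UNIV"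

end

theory Submission
  imports Defs
begin


abbreviation "S1 \<equiv> sphere (0::complex) 1"

lemma S1_cnj_mult: "w \<in> S1 \<Longrightarrow> cnj w * w = 1"
  using complex_norm_square[of w] by (simp add: mult.commute)

lemma S1_nz: "w \<in> S1 \<Longrightarrow> w \<noteq> 0" by auto

lemma cis_Arg_S1: "w \<in> S1 \<Longrightarrow> cis (Arg w) = w"
  using S1_nz[of w] by (simp add: cis_Arg sgn_div_norm)

lemma cis_in_S1 [simp]: "cis t \<in> S1" by simp

lemma S1_notbot: "z \<in> S1 \<Longrightarrow> at z within S1 \<noteq> bot"
proof -
  assume z: "z \<in> S1"
  have "z islimpt S1"
  proof (rule connected_imp_perfect[OF connected_sphere z])
    show "2 \<le> DIM(complex)" by simp
    show "S1 \<noteq> {x}" for x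
    proof
      assume "S1 = {x}"
      moreover have "(1::complex) \<in> S1" "(-1::complex) \<in> S1" by simp_all
      ultimately have "1 \<in> {x}" "-1 \<in> {x}" by blast+
      then show False by simp
    qed
  qed
  then show ?thesis using trivial_limit_within by blast
qed

lemma vd_quot:
  fixes G :: "real \<Rightarrow> complex"
  assumes "(G has_vector_derivative L) (at s)"
  shows "((\<lambda>h. (G (s + h) - G s) / of_real h) \<longlongrightarrow> L) (at 0)"
proof -
  have "(\<lambda>h. norm (G (s + h) - G s - h *\<^sub>R L) / norm h) \<midarrow>0\<rightarrow> 0"
    using assms by (simp add: has_vector_derivative_def has_derivative_at)
  moreover have ev: "\<forall>\<^sub>F h in at 0. norm (G (s + h) - G s - h *\<^sub>R L) / norm h
      = norm ((G (s + h) - G s) / of_real h - L)"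
  proof (rule eventually_at_filter[THEN iffD2], intro always_eventually allI impI)
    fix h :: real assume "h \<noteq> 0"
    then have "(G (s + h) - G s) / of_real h - L = (G (s + h) - G s - h *\<^sub>R L) / of_real h"
      by (simp add: scaleR_conv_of_real diff_divide_distrib)
    then show "norm (G (s + h) - G s - h *\<^sub>R L) / norm h = norm ((G (s + h) - G s) / of_real h - L)"
      by (simp add: norm_divide)
  qed
  ultimately have "((\<lambda>h. norm ((G (s + h) - G s) / of_real h - L)) \<longlongrightarrow> 0) (at 0)"
    using tendsto_cong[OF ev] by simp
  then have "((\<lambda>h. (G (s + h) - G s) / of_real h - L) \<longlongrightarrow> 0) (at 0)"
    by (rule tendsto_norm_zero_iff[THEN iffD1])
  then show ?thesis by (rule Lim_null[THEN iffD2])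
qed

lemma cis_deriv:
  "((\<lambda>t. cis (k * t)) has_vector_derivative (\<i> * of_real k * cis (k * t))) (at t within X)"
proof -
  have "((\<lambda>z. exp (\<i> * of_real k * z)) has_field_derivative (\<i> * of_real k * exp (\<i> * of_real k * of_real t))) (at (of_real t))"
    using DERIV_chain2[OF DERIV_exp DERIV_cmult_Id, of "\<i> * of_real k" "of_real t" UNIV]
    by (simp add: mult.commute)
  from has_vector_derivative_real_field[OF this, where s=X]
  show ?thesis by (simp add: cis_conv_exp mult.assoc)
qed

lemma dd: "(x::complex) \<noteq> 0 \<Longrightarrow> (a / x) / (b / x) = a / b"
  by (cases "b = 0") (auto simp: field_simps)

lemma quot_lim:
  fixes g :: "real \<Rightarrow> complex"
  assumes "(g has_vector_derivative D) (at s)"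
  shows "((\<lambda>\<theta>. (g (s + \<theta>) - g s) / (1 - cis (- \<theta>))) \<longlongrightarrow> D / \<i>) (at 0)"
proof -
  have c: "((\<lambda>t. 1 - cis ((-1) * t)) has_vector_derivative (\<i> * cis ((-1) * 0))) (at 0)"
    using cis_deriv[of "-1" 0 UNIV]
    by (auto intro!: derivative_eq_intros)
  have q1: "((\<lambda>h. (g (s + h) - g s) / of_real h) \<longlongrightarrow> D) (at 0)" by (rule vd_quot[OF assms])
  have q2: "((\<lambda>h. ((1 - cis ((-1) * (0 + h))) - (1 - cis ((-1) * 0))) / of_real h) \<longlongrightarrow> \<i> * cis ((-1) * 0)) (at 0)"
    by (rule vd_quot[OF c])
  have q2': "((\<lambda>h. (1 - cis (- h)) / of_real h) \<longlongrightarrow> \<i>) (at 0)"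
    using q2 by simp
  have "((\<lambda>h. ((g (s + h) - g s) / of_real h) / ((1 - cis (- h)) / of_real h)) \<longlongrightarrow> D / \<i>) (at 0)"
    by (rule tendsto_divide[OF q1 q2']) simp
  moreover have ev: "\<forall>\<^sub>F h in at (0::real). ((g (s + h) - g s) / of_real h) / ((1 - cis (- h)) / of_real h)
      = (g (s + h) - g s) / (1 - cis (- h))"
    by (rule eventually_at_filter[THEN iffD2], intro always_eventually allI impI) (simp add: dd)
  ultimately show ?thesis using tendsto_cong[OF ev] by simp
qed

lemma chord_bound:
  assumes "\<bar>\<theta>\<bar> \<le> pi"
  shows "\<bar>\<theta>\<bar> \<le> 3 * norm (1 - cis \<theta>)"
proof -
  define x where "x = \<bar>\<theta>\<bar> / 2"
  have x0: "0 \<le> x" and x1: "x \<le> pi / 2" using assms by (auto simp: x_def)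
  have m: "\<bar>sin x - (\<Sum>m<3. sin_coeff m * x ^ m)\<bar> \<le> inverse (fact 3) * \<bar>x\<bar> ^ 3"
    by (rule Maclaurin_sin_bound)
  have s3: "(\<Sum>m<3. sin_coeff m * x ^ m) = x"
    by (simp add: eval_nat_numeral sin_coeff_def)
  have "fact 3 = (6::real)" by (simp add: eval_nat_numeral)
  then have f3: "inverse (fact 3) * \<bar>x\<bar> ^ 3 = x ^ 3 / 6"
    using x0 by simp
  have "\<bar>sin x - x\<bar> \<le> x ^ 3 / 6" using m unfolding s3 f3 .
  then have s1: "sin x \<ge> x - x ^ 3 / 6" by linarith
  have x2: "x \<le> 2" using x1 pi_less_4 by simp
  have "x * x \<le> 2 * 2" using x0 x2 by (intro mult_mono) auto
  then have "x * x * x \<le> (2 * 2) * x" using x0 by (rule mult_right_mono)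
  then have x3: "x ^ 3 \<le> 4 * x" by (simp add: power3_eq_cube)
  have sx: "sin x \<ge> x / 3" using s1 x3 by linarith
  have c1: "(norm (1 - cis \<theta>))\<^sup>2 = (1 - cos \<theta>)\<^sup>2 + (sin \<theta>)\<^sup>2"
    by (simp add: cmod_def)
  have c2: "(1 - cos \<theta>)\<^sup>2 + (sin \<theta>)\<^sup>2 = 2 - 2 * cos \<theta>"
    using sin_cos_squared_add[of \<theta>] by (simp add: power2_eq_square algebra_simps)
  have "2 * x = \<bar>\<theta>\<bar>" by (simp add: x_def)
  then have c3: "cos \<theta> = cos (2 * x)" by (cases "\<theta> \<ge> 0") simp_all
  have c4: "2 - 2 * cos (2 * x) = (2 * sin x)\<^sup>2" by (simp add: cos_double_sin power2_eq_square)
  have sq: "(norm (1 - cis \<theta>))\<^sup>2 = (2 * sin x)\<^sup>2" using c1 c2 c3 c4 by simp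
  have "0 \<le> 2 * sin x" using sin_ge_zero[of x] x0 x1 pi_gt_zero by simp
  then have "norm (1 - cis \<theta>) = 2 * sin x"
    using power2_eq_imp_eq[OF sq] by simp
  then show ?thesis using sx by (simp add: x_def)
qed


lemma lift_cont:
  fixes G :: "real \<Rightarrow> 'a::topological_space"
  assumes cG: "continuous_on UNIV G" and inv: "\<And>a b. cis a = cis b \<Longrightarrow> G a = G b"
  shows "continuous_on S1 (\<lambda>w. G (Arg w))"
  unfolding continuous_on_eq_continuous_within
proof
  fix w assume w: "w \<in> S1"
  have iG: "isCont G x" for x
    using cG continuous_on_eq_continuous_at[of UNIV G] by simp
  show "continuous (at w within S1) (\<lambda>w. G (Arg w))"
  proof (cases "w \<in> \<real>\<^sub>\<le>\<^sub>0")
    case False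
    have "isCont (\<lambda>w. G (Arg w)) w"
      by (rule isCont_o2[OF continuous_at_Arg[OF False] iG])
    then show ?thesis by (rule continuous_at_imp_continuous_within)
  next
    case True
    then have nw: "- w \<notin> \<real>\<^sub>\<le>\<^sub>0" using w by (auto simp: complex_nonpos_Reals_iff complex_eq_iff cmod_def)
    have a1: "isCont (\<lambda>v. - v) w" by (intro continuous_intros)
    have a2: "isCont (\<lambda>v. Arg (- v)) w" by (rule isCont_o2[OF a1 continuous_at_Arg[OF nw]])
    have a3: "isCont (\<lambda>v. Arg (- v) + pi) w" using a2 by (intro continuous_intros)
    have c: "isCont (\<lambda>v. G (Arg (- v) + pi)) w" by (rule isCont_o2[OF a3 iG])
    have eq: "G (Arg (- v) + pi) = G (Arg v)" if "v \<in> S1" for v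
    proof (rule inv)
      have "cis (Arg (- v) + pi) = cis (Arg (- v)) * cis pi" by (simp only: cis_mult)
      also have "\<dots> = v" using cis_Arg_S1[of "- v"] that by simp
      also have "\<dots> = cis (Arg v)" using cis_Arg_S1[OF that] by simp
      finally show "cis (Arg (- v) + pi) = cis (Arg v)" .
    qed
    have "continuous (at w within S1) (\<lambda>v. G (Arg (- v) + pi))"
      using c by (rule continuous_at_imp_continuous_within)
    then show ?thesis
      by (rule continuous_transform_within[of _ _ _ 1]) (use w eq in auto)
  qed
qed

definition Dc :: "(complex \<Rightarrow> complex) \<Rightarrow> real \<Rightarrow> complex" where
  "Dc f t = vector_derivative (\<lambda>t. f (cis t)) (at t)"

lemma C1_D:
  assumes "C1_circle f"
  shows "((\<lambda>t. f (cis t)) has_vector_derivative Dc f t) (at t)"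
proof -
  have "(\<lambda>t. f (cis t)) differentiable at t"
    using assms unfolding C1_circle_def C1_differentiable_on_eq by simp
  then show ?thesis unfolding Dc_def by (rule vector_derivative_works[THEN iffD1])
qed

lemma C1_Dcont: "C1_circle f \<Longrightarrow> continuous_on UNIV (Dc f)"
  unfolding C1_circle_def C1_differentiable_on_eq Dc_def by simp

lemma C1_gcont: "C1_circle f \<Longrightarrow> continuous_on UNIV (\<lambda>t. f (cis t))"
  unfolding C1_circle_def by (intro differentiable_imp_continuous_on C1_diff_imp_diff)

lemma Dc_inv:
  assumes f: "C1_circle f" and ab: "cis a = cis b"
  shows "Dc f a = Dc f b"
proof -
  let ?g = "\<lambda>t. f (cis t)"
  have c1: "cis (a - b) = 1" using ab by (simp add: cis_divide[symmetric])
  have per: "?g (t + (a - b)) = ?g t" for t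
    using c1 by (simp add: cis_mult[symmetric])
  have sh: "((\<lambda>t. t + (a - b)) has_vector_derivative 1) (at b)"
    using has_vector_derivative_add[OF has_vector_derivative_id has_vector_derivative_const] by simp
  have "((?g \<circ> (\<lambda>t. t + (a - b))) has_vector_derivative (1 *\<^sub>R Dc f (b + (a - b)))) (at b)"
    by (rule vector_diff_chain_at[OF sh]) (rule C1_D[OF f])
  then have "(?g has_vector_derivative Dc f a) (at b)"
    using per by (simp add: o_def)
  from vector_derivative_unique_at[OF C1_D[OF f, of b] this] show ?thesis by simp
qed

lemma f_S1: "w \<in> S1 \<Longrightarrow> f w = f (cis (Arg w))"
  by (simp add: cis_Arg_S1)

lemma C1_fcont:
  assumes f: "C1_circle f"
  shows "continuous_on S1 f"
proof -
  have "continuous_on S1 (\<lambda>w. f (cis (Arg w)))"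
    by (rule lift_cont[OF C1_gcont[OF f]]) simp
  then show ?thesis by (rule continuous_on_eq) (simp add: cis_Arg_S1)
qed

lemma mvt_bound:
  fixes \<eta> :: "real \<Rightarrow> complex"
  assumes d: "\<And>t. (\<eta> has_vector_derivative D t) (at t)" and B: "\<And>t. norm (D t) \<le> B"
  shows "norm (\<eta> a - \<eta> b) \<le> B * \<bar>a - b\<bar>"
proof -
  have "norm (\<eta> a - \<eta> b) \<le> B * norm (a - b)"
  proof (rule differentiable_bound[of UNIV \<eta> "\<lambda>t h. h *\<^sub>R D t" B a b])
    show "convex (UNIV::real set)" by simp
    show "(\<eta> has_derivative (\<lambda>h. h *\<^sub>R D x)) (at x within UNIV)" for x
      using d[of x] by (simp add: has_vector_derivative_def)
    show "onorm (\<lambda>h. h *\<^sub>R D x) \<le> B" for x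
      using onorm_scaleR_left[of "\<lambda>h. h" "D x"] onorm_id[where 'a=real] B[of x] by simp
  qed auto
  then show ?thesis by simp
qed

lemma S1_div: "w \<in> S1 \<Longrightarrow> z \<in> S1 \<Longrightarrow> w / z \<in> S1"
  by (simp add: norm_divide)

lemma S1_param:
  assumes w: "w \<in> S1" and z: "z \<in> S1"
  shows "cis (Arg z + Arg (w / z)) = w" and "cnj w * z = cis (- Arg (w / z))"
proof -
  have zz: "z \<noteq> 0" using z by auto
  show e: "cis (Arg z + Arg (w / z)) = w"
    using cis_Arg_S1[OF z] cis_Arg_S1[OF S1_div[OF w z]] zz by (simp add: cis_mult[symmetric])
  have "cnj w * z = cnj (cis (Arg z + Arg (w / z))) * cis (Arg z)"
    using e cis_Arg_S1[OF z] by simp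
  also have "\<dots> = cis (- Arg (w / z))"
    by (simp add: cis_cnj cis_mult)
  finally show "cnj w * z = cis (- Arg (w / z))" .
qed

lemma Arg_div_nz:
  assumes w: "w \<in> S1" and z: "z \<in> S1" and ne: "w \<noteq> z"
  shows "Arg (w / z) \<noteq> 0"
proof
  assume "Arg (w / z) = 0"
  then have "cis (Arg (w / z)) = 1" by simp
  then have "w / z = 1" using cis_Arg_S1[OF S1_div[OF w z]] by simp
  then show False using ne z by auto
qed

lemma q_lim:
  assumes f: "C1_circle f" and z: "z \<in> S1"
  shows "((\<lambda>w. (f w - f z) / (1 - cnj w * z)) \<longlongrightarrow> Dc f (Arg z) / \<i>) (at z within S1)"
proof -
  define s where "s = Arg z"
  define \<theta> where "\<theta> = (\<lambda>w. Arg (w / z))"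
  define \<Lambda> where "\<Lambda> = (\<lambda>h. (f (cis (s + h)) - f (cis s)) / (1 - cis (- h)))"
  have L: "(\<Lambda> \<longlongrightarrow> Dc f s / \<i>) (at 0)"
    unfolding \<Lambda>_def by (rule quot_lim[OF C1_D[OF f]])
  have zz: "z \<noteq> 0" using z by auto
  have "continuous (at z) (\<lambda>w. Arg (w / z))"
  proof -
    have "continuous (at z) (\<lambda>w. w / z)" using zz by (intro continuous_intros)
    moreover have "continuous (at 1) Arg"
      by (rule continuous_at_Arg) (simp add: complex_nonpos_Reals_iff)
    moreover have "z / z = 1" using zz by simp
    ultimately show ?thesis using continuous_at_compose[of z "\<lambda>w. w / z" Arg] by (simp add: o_def)
  qed
  from continuous_at_imp_continuous_within[OF this, of S1, unfolded continuous_within]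
  have "((\<lambda>w. Arg (w / z)) \<longlongrightarrow> Arg (z / z)) (at z within S1)" .
  then have t0: "(\<theta> \<longlongrightarrow> 0) (at z within S1)" using zz by (simp add: \<theta>_def)
  have "filterlim \<theta> (at 0) (at z within S1)"
    unfolding filterlim_at
  proof
    show "\<forall>\<^sub>F w in at z within S1. \<theta> w \<in> UNIV \<and> \<theta> w \<noteq> 0"
    proof (rule eventually_at_filter[THEN iffD2], intro always_eventually allI impI)
      fix w assume "w \<noteq> z" "w \<in> S1"
      then show "\<theta> w \<in> UNIV \<and> \<theta> w \<noteq> 0" using Arg_div_nz[of w z] z by (simp add: \<theta>_def)
    qed
  qed (rule t0)
  from filterlim_compose[OF L this]
  have c: "((\<lambda>w. \<Lambda> (\<theta> w)) \<longlongrightarrow> Dc f s / \<i>) (at z within S1)" .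
  have ev: "\<forall>\<^sub>F w in at z within S1. \<Lambda> (\<theta> w) = (f w - f z) / (1 - cnj w * z)"
  proof (rule eventually_at_filter[THEN iffD2], intro always_eventually allI impI)
    fix w assume "w \<noteq> z" "w \<in> S1"
    then show "\<Lambda> (\<theta> w) = (f w - f z) / (1 - cnj w * z)"
      unfolding \<Lambda>_def \<theta>_def s_def using S1_param[of w z] z cis_Arg_S1[OF z] by simp
  qed
  from iffD1[OF tendsto_cong[OF ev] c] show ?thesis unfolding s_def .
qed

lemma dq_diag:
  assumes f: "C1_circle f" and z: "z \<in> S1"
  shows "dq f z z = Dc f (Arg z) / \<i>"
  unfolding dq_def using tendsto_Lim[OF _ q_lim[OF f z]] S1_notbot[OF z] by simp

lemma den_nz:
  assumes "\<xi> \<in> S1" "z \<in> S1" "\<xi> \<noteq> z"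
  shows "1 - cnj \<xi> * z \<noteq> 0"
proof
  assume "1 - cnj \<xi> * z = 0"
  then have a: "cnj \<xi> * z = 1" by simp
  have "z = (cnj \<xi> * \<xi>) * z" using S1_cnj_mult[OF assms(1)] by simp
  also have "\<dots> = \<xi> * (cnj \<xi> * z)" by (simp only: ac_simps)
  also have "\<dots> = \<xi>" using a by simp
  finally have "z = \<xi>" .
  then show False using assms by simp
qed

lemma dq_off: "\<xi> \<noteq> z \<Longrightarrow> dq f z \<xi> = (f \<xi> - f z) / (1 - cnj \<xi> * z)"
  by (simp add: dq_def)

lemma dq_cont:
  assumes f: "C1_circle f" and z: "z \<in> S1"
  shows "continuous_on S1 (dq f z)"
  unfolding continuous_on_eq_continuous_within
proof
  fix \<xi> assume \<xi>: "\<xi> \<in> S1"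
  show "continuous (at \<xi> within S1) (dq f z)"
  proof (cases "\<xi> = z")
    case True
    have ev: "\<forall>\<^sub>F w in at z within S1. (f w - f z) / (1 - cnj w * z) = dq f z w"
      by (rule eventually_at_filter[THEN iffD2], intro always_eventually allI impI) (simp add: dq_off)
    have "(dq f z \<longlongrightarrow> dq f z z) (at z within S1)"
      using iffD1[OF tendsto_cong[OF ev] q_lim[OF f z]] dq_diag[OF f z] by simp
    then show ?thesis using True by (simp add: continuous_within)
  next
    case False
    have cf: "continuous (at \<xi> within S1) f"
      using C1_fcont[OF f] \<xi> by (simp add: continuous_on_eq_continuous_within)
    have "continuous (at \<xi> within S1) (\<lambda>w. (f w - f z) / (1 - cnj w * z))"
      using den_nz[OF \<xi> z False] cf by (intro continuous_intros) auto
    then show ?thesis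
    proof (rule continuous_transform_within[of _ _ _ "dist \<xi> z"])
      show "0 < dist \<xi> z" using False by simp
      show "\<xi> \<in> S1" by (rule \<xi>)
      fix w assume "w \<in> S1" "dist w \<xi> < dist \<xi> z"
      then have "w \<noteq> z" by (auto simp: dist_commute)
      then show "(f w - f z) / (1 - cnj w * z) = dq f z w" by (simp add: dq_off)
    qed
  qed
qed

lemma dq_bound:
  assumes f: "C1_circle f" and B: "\<And>t. norm (Dc f t) \<le> B" and z: "z \<in> S1" and \<xi>: "\<xi> \<in> S1"
  shows "norm (dq f z \<xi>) \<le> 3 * B"
proof (cases "\<xi> = z")
  case True
  have "0 \<le> B" using B[of 0] norm_ge_zero order_trans by blast
  then show ?thesis using True dq_diag[OF f z] B[of "Arg z"] by (simp add: norm_divide norm_mult)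
next
  case False
  define h where "h = Arg (\<xi> / z)"
  have h0: "h \<noteq> 0" using Arg_div_nz[OF \<xi> z False] by (simp add: h_def)
  have hpi: "\<bar>h\<bar> \<le> pi" using Arg_bounded[of "\<xi> / z"] by (simp add: h_def abs_le_iff)
  have e1: "f \<xi> = f (cis (Arg z + h))" using S1_param(1)[OF \<xi> z] by (simp add: h_def)
  have e2: "f z = f (cis (Arg z))" using cis_Arg_S1[OF z] by simp
  have e3: "1 - cnj \<xi> * z = 1 - cis (- h)" using S1_param(2)[OF \<xi> z] by (simp add: h_def)
  have num: "norm (f \<xi> - f z) \<le> B * \<bar>h\<bar>"
    using mvt_bound[of "\<lambda>t. f (cis t)" "Dc f" B "Arg z + h" "Arg z", OF C1_D[OF f] B] e1 e2 by simp
  have den: "\<bar>h\<bar> \<le> 3 * norm (1 - cnj \<xi> * z)"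
    using chord_bound[of "- h"] hpi e3 by simp
  have dpos: "0 < norm (1 - cnj \<xi> * z)" using den_nz[OF \<xi> z False] by simp
  have "norm (dq f z \<xi>) = norm (f \<xi> - f z) / norm (1 - cnj \<xi> * z)"
    using False by (simp add: dq_off norm_divide)
  also have "\<dots> \<le> B * \<bar>h\<bar> / norm (1 - cnj \<xi> * z)"
    using num dpos by (simp add: divide_right_mono)
  also have "\<dots> \<le> B * (3 * norm (1 - cnj \<xi> * z)) / norm (1 - cnj \<xi> * z)"
  proof -
    have "0 \<le> B" using B[of 0] norm_ge_zero order_trans by blast
    then have "B * \<bar>h\<bar> \<le> B * (3 * norm (1 - cnj \<xi> * z))" using mult_left_mono[OF den] by simp
    then show ?thesis by (rule divide_right_mono) (use dpos in simp)
  qed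
  also have "\<dots> = 3 * B" using dpos by simp
  finally show ?thesis .
qed


lemma cm_space: "circle_measure M \<Longrightarrow> space M = S1"
  unfolding circle_measure_def
  using sets_eq_imp_space_eq[of M "restrict_space borel S1"] by (simp add: space_restrict_space)

lemma cm_prob: "circle_measure M \<Longrightarrow> prob_space M" by (simp add: circle_measure_def)

lemma cm_meas:
  fixes h :: "complex \<Rightarrow> 'b::topological_space"
  assumes M: "circle_measure M" and h: "continuous_on S1 h"
  shows "h \<in> borel_measurable M"
proof -
  have "h \<in> borel_measurable (restrict_space borel S1)"
    by (rule borel_measurable_continuous_on_restrict[OF h])
  moreover have "sets M = sets (restrict_space borel S1)" using M by (simp add: circle_measure_def)
  ultimately show ?thesis using measurable_cong_sets[of M "restrict_space borel S1" borel borel] by simp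
qed

lemma cm_int:
  fixes h :: "complex \<Rightarrow> 'b::{banach,second_countable_topology}"
  assumes M: "circle_measure M" and h: "continuous_on S1 h"
  shows "integrable M h"
proof -
  interpret prob_space M using cm_prob[OF M] .
  obtain B where B: "\<And>x. x \<in> S1 \<Longrightarrow> norm (h x) \<le> B"
    using continuous_on_compact_bound[OF compact_sphere h] by blast
  have "AE x in M. norm (h x) \<le> B" by (rule AE_I2) (simp add: B cm_space[OF M])
  then show ?thesis by (rule integrable_const_bound) (rule cm_meas[OF M h])
qed

lemma cm_L2:
  assumes M: "circle_measure M" and h: "continuous_on S1 h"
  shows "L2 M h"
  unfolding L2_def
proof
  show "h \<in> borel_measurable M" by (rule cm_meas[OF M h])
  have "continuous_on S1 (\<lambda>x. (norm (h x))\<^sup>2)" using h by (intro continuous_intros)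
  then show "integrable M (\<lambda>x. (norm (h x))\<^sup>2)" by (rule cm_int[OF M])
qed

lemma cis_powi: "cis t powi n = cis (of_int n * t)"
proof (cases "n \<ge> 0")
  case True
  then obtain m where m: "n = int m" using nonneg_int_cases by blast
  have "cis t powi n = cis t ^ m" by (simp only: m power_int_of_nat)
  also have "\<dots> = cis (real m * t)" by (rule Complex.DeMoivre)
  finally show ?thesis by (simp add: m)
next
  case False
  then have n: "n = - int (nat (- n))" by simp
  have "cis t powi n = inverse (cis t ^ nat (- n))"
    by (subst n, simp only: power_int_minus power_int_of_nat)
  also have "\<dots> = cis (- (real (nat (- n)) * t))" by (simp add: Complex.DeMoivre)
  also have "- (real (nat (- n)) * t) = of_int n * t" using False by simp
  finally show ?thesis .
qed

lemma C1_cis_k: "(\<lambda>t. cis (k * t)) C1_differentiable_on UNIV"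
  unfolding C1_differentiable_on_def
proof (intro exI conjI ballI)
  show "((\<lambda>t. cis (k * t)) has_vector_derivative \<i> * of_real k * cis (k * t)) (at t)" for t
    by (rule cis_deriv)
  have "isCont (\<lambda>t. cis (k * t)) t" for t
    by (rule has_vector_derivative_continuous[OF cis_deriv])
  then have "continuous_on UNIV (\<lambda>t. cis (k * t))"
    by (intro continuous_at_imp_continuous_on ballI)
  then show "continuous_on UNIV (\<lambda>t. \<i> * of_real k * cis (k * t))"
    by (rule continuous_on_mult[OF continuous_on_const])
qed

lemma C1_circle_powi: "C1_circle (\<lambda>x. x powi n)"
  unfolding C1_circle_def cis_powi by (rule C1_cis_k)

lemma C1_circle_pow: "C1_circle (\<lambda>x. x ^ n)"
  using C1_circle_powi[of "int n"] by simp

lemma C1_circle_const: "C1_circle (\<lambda>x. c)"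
  unfolding C1_circle_def by simp

lemma C1_circle_lin:
  "C1_circle f \<Longrightarrow> C1_circle g \<Longrightarrow> C1_circle (\<lambda>x. a * f x + b * g x)"
  unfolding C1_circle_def by (intro C1_differentiable_on_add C1_differentiable_on_mult C1_differentiable_on_const)

lemma C1_circle_shift: "C1_circle f \<Longrightarrow> C1_circle (\<lambda>x. x * f x)"
  unfolding C1_circle_def using C1_cis_k[of 1] by (intro C1_differentiable_on_mult) simp_all

lemma C1_L2: "circle_measure M \<Longrightarrow> C1_circle f \<Longrightarrow> L2 M f"
  by (rule cm_L2) (simp_all add: C1_fcont)

lemma qlin: "((a * x1 + b * y1) - (a * x0 + b * y0)) / d
    = a * ((x1 - x0) / d) + b * ((y1 - y0) / (d::complex))"
  by (cases "d = 0") (simp_all add: field_simps)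

lemma dq_lin:
  assumes f: "C1_circle f" and g: "C1_circle g" and z: "z \<in> S1"
  shows "dq (\<lambda>x. a * f x + b * g x) z \<xi> = a * dq f z \<xi> + b * dq g z \<xi>"
proof (cases "\<xi> = z")
  case False
  have "dq (\<lambda>x. a * f x + b * g x) z \<xi> = ((a * f \<xi> + b * g \<xi>) - (a * f z + b * g z)) / (1 - cnj \<xi> * z)"
    by (rule dq_off[OF False])
  also have "\<dots> = a * ((f \<xi> - f z) / (1 - cnj \<xi> * z)) + b * ((g \<xi> - g z) / (1 - cnj \<xi> * z))"
    by (rule qlin)
  finally show ?thesis using dq_off[OF False, of f] dq_off[OF False, of g] by simp
next
  case True
  have "dq (\<lambda>x. a * f x + b * g x) z z
      = Lim (at z within S1) (\<lambda>w. ((a * f w + b * g w) - (a * f z + b * g z)) / (1 - cnj w * z))"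
    by (simp add: dq_def)
  also have "(\<lambda>w. ((a * f w + b * g w) - (a * f z + b * g z)) / (1 - cnj w * z))
      = (\<lambda>w. a * ((f w - f z) / (1 - cnj w * z)) + b * ((g w - g z) / (1 - cnj w * z)))"
    by (rule ext) (rule qlin)
  also have "Lim (at z within S1) \<dots> = a * (Dc f (Arg z) / \<i>) + b * (Dc g (Arg z) / \<i>)"
    by (rule tendsto_Lim[OF S1_notbot[OF z]]) (intro tendsto_intros q_lim f g z)
  finally show ?thesis using True dq_diag[OF f z] dq_diag[OF g z] by simp
qed

lemma dq_const: assumes z: "z \<in> S1" shows "dq (\<lambda>x. c) z \<xi> = 0"
proof -
  have "Lim (at z within S1) (\<lambda>w. (0::complex)) = 0" by (rule tendsto_Lim[OF S1_notbot[OF z] tendsto_const])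
  then show ?thesis unfolding dq_def by simp
qed

lemma qshift:
  assumes \<xi>: "\<xi> \<in> S1" and d: "1 - cnj \<xi> * z \<noteq> 0"
  shows "(\<xi> * y1 - z * y0) / (1 - cnj \<xi> * z) = z * ((y1 - y0) / (1 - cnj \<xi> * z)) + \<xi> * y1"
proof -
  have c: "cnj \<xi> * \<xi> = 1" by (rule S1_cnj_mult[OF \<xi>])
  have "\<xi> * y1 * (cnj \<xi> * z) = y1 * z * (cnj \<xi> * \<xi>)" by (simp only: ac_simps)
  then have e: "\<xi> * y1 * (cnj \<xi> * z) = y1 * z" using c by simp
  have e2: "\<xi> * y1 * (1 - cnj \<xi> * z) = \<xi> * y1 - y1 * z" using e by (simp add: right_diff_distrib)
  have "\<xi> * y1 - z * y0 = z * (y1 - y0) + (\<xi> * y1 - y1 * z)" by (simp add: algebra_simps)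
  then have "\<xi> * y1 - z * y0 = z * (y1 - y0) + \<xi> * y1 * (1 - cnj \<xi> * z)" by (simp only: e2)
  then have "(\<xi> * y1 - z * y0) / (1 - cnj \<xi> * z)
      = (z * (y1 - y0) + \<xi> * y1 * (1 - cnj \<xi> * z)) / (1 - cnj \<xi> * z)" by simp
  also have "\<dots> = z * ((y1 - y0) / (1 - cnj \<xi> * z)) + \<xi> * y1"
    using d by (simp add: add_divide_distrib)
  finally show ?thesis .
qed

lemma dq_shift:
  assumes f: "C1_circle f" and z: "z \<in> S1" and \<xi>: "\<xi> \<in> S1"
  shows "dq (\<lambda>x. x * f x) z \<xi> = z * dq f z \<xi> + \<xi> * f \<xi>"
proof (cases "\<xi> = z")
  case False
  then show ?thesis using qshift[OF \<xi> den_nz[OF \<xi> z False]] by (simp add: dq_off)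
next
  case True
  have ev: "\<forall>\<^sub>F w in at z within S1. z * ((f w - f z) / (1 - cnj w * z)) + w * f w
      = (w * f w - z * f z) / (1 - cnj w * z)"
  proof (rule eventually_at_filter[THEN iffD2], intro always_eventually allI impI)
    fix w assume "w \<noteq> z" "w \<in> S1"
    then show "z * ((f w - f z) / (1 - cnj w * z)) + w * f w = (w * f w - z * f z) / (1 - cnj w * z)"
      using qshift[of w z "f w" "f z"] den_nz[of w z] z by simp
  qed
  have cf: "(f \<longlongrightarrow> f z) (at z within S1)"
    using C1_fcont[OF f] z by (simp add: continuous_on_def)
  have "((\<lambda>w. z * ((f w - f z) / (1 - cnj w * z)) + w * f w) \<longlongrightarrow> z * (Dc f (Arg z) / \<i>) + z * f z)
      (at z within S1)"
    by (intro tendsto_intros q_lim f z cf)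
  from iffD1[OF tendsto_cong[OF ev] this]
  have "Lim (at z within S1) (\<lambda>w. (w * f w - z * f z) / (1 - cnj w * z)) = z * (Dc f (Arg z) / \<i>) + z * f z"
    by (rule tendsto_Lim[OF S1_notbot[OF z]])
  then show ?thesis using True dq_diag[OF f z] by (simp add: dq_def)
qed

lemma dq_cong:
  assumes fg: "\<And>x. x \<in> S1 \<Longrightarrow> f x = g x" and z: "z \<in> S1" and \<xi>: "\<xi> \<in> S1"
  shows "dq f z \<xi> = dq g z \<xi>"
proof (cases "\<xi> = z")
  case False
  then show ?thesis using fg z \<xi> by (simp add: dq_off)
next
  case True
  have ev: "\<forall>\<^sub>F w in at z within S1. (f w - f z) / (1 - cnj w * z) = (g w - g z) / (1 - cnj w * z)"
  proof (rule eventually_at_filter[THEN iffD2], intro always_eventually allI impI)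
    fix w assume "w \<noteq> z" "w \<in> S1"
    then show "(f w - f z) / (1 - cnj w * z) = (g w - g z) / (1 - cnj w * z)" using fg[of w] fg[OF z] by simp
  qed
  have "Lim (at z within S1) (\<lambda>w. (f w - f z) / (1 - cnj w * z))
      = Lim (at z within S1) (\<lambda>w. (g w - g z) / (1 - cnj w * z))"
  proof -
    have "(\<lambda>l. ((\<lambda>w. (f w - f z) / (1 - cnj w * z)) \<longlongrightarrow> l) (at z within S1))
        = (\<lambda>l. ((\<lambda>w. (g w - g z) / (1 - cnj w * z)) \<longlongrightarrow> l) (at z within S1))"
      by (rule ext) (rule tendsto_cong[OF ev])
    then show ?thesis by (simp add: Topological_Spaces.Lim_def)
  qed
  then show ?thesis using True by (simp add: dq_def)
qed

definition lpoly :: "(complex \<times> int) list \<Rightarrow> complex \<Rightarrow> complex" where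
  "lpoly L w = (\<Sum>(c, n)\<leftarrow>L. c * w powi n)"

lemma lpoly_Nil [simp]: "lpoly [] w = 0" by (simp add: lpoly_def)
lemma lpoly_Cons [simp]: "lpoly ((c, n) # L) w = c * w powi n + lpoly L w" by (simp add: lpoly_def)

lemma C1_lpoly: "C1_circle (lpoly L)"
proof (induction L)
  case Nil
  have "lpoly [] = (\<lambda>x. 0)" by (rule ext) simp
  then show ?case using C1_circle_const by simp
next
  case (Cons p L)
  obtain c n where p: "p = (c, n)" by (cases p)
  have "lpoly (p # L) = (\<lambda>x. c * x powi n + 1 * lpoly L x)" by (rule ext) (simp add: p)
  then show ?case using C1_circle_lin[OF C1_circle_powi[of n] Cons.IH, of c 1] by simp
qed


locale setting =
  fixes \<mu> \<mu>\<alpha> :: "complex measure" and \<alpha> :: complex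
    and V :: "(complex \<Rightarrow> complex) \<Rightarrow> (complex \<Rightarrow> complex)"
  assumes \<mu>: "circle_measure \<mu>" and \<alpha>: "norm \<alpha> = 1" and \<mu>\<alpha>: "circle_measure \<mu>\<alpha>"
    and V_unitary: "unitary_L2 \<mu> \<mu>\<alpha> V"
    and V_intertw: "\<And>g. L2 \<mu> g \<Longrightarrow> AE z in \<mu>\<alpha>. V (U_alpha \<mu> \<alpha> g) z = z * V g z"
    and V_one: "AE z in \<mu>\<alpha>. V (\<lambda>_. 1) z = 1"
begin

definition W :: "(complex \<Rightarrow> complex) \<Rightarrow> complex \<Rightarrow> complex" where
  "W f z = f z + (1 - \<alpha>) * (LINT \<xi>|\<mu>. dq f z \<xi>)"

definition good :: "(complex \<Rightarrow> complex) \<Rightarrow> bool" where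
  "good f \<longleftrightarrow> (AE z in \<mu>\<alpha>. V f z = W f z)"

lemma V_L2: "L2 \<mu> f \<Longrightarrow> L2 \<mu>\<alpha> (V f)"
  using V_unitary unfolding unitary_L2_def by blast

lemma V_lin: "L2 \<mu> f \<Longrightarrow> L2 \<mu> g \<Longrightarrow> AE z in \<mu>\<alpha>. V (\<lambda>x. a * f x + b * g x) z = a * V f z + b * V g z"
  using V_unitary unfolding unitary_L2_def by blast

lemma V_iso: "L2 \<mu> f \<Longrightarrow> L2 \<mu> g \<Longrightarrow> L2_inner \<mu>\<alpha> (V f) (V g) = L2_inner \<mu> f g"
  using V_unitary unfolding unitary_L2_def by blast

lemma V_cong:
  assumes "L2 \<mu> f" "L2 \<mu> g" "\<And>x. x \<in> S1 \<Longrightarrow> f x = g x"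
  shows "AE z in \<mu>\<alpha>. V f z = V g z"
proof -
  have "AE x in \<mu>. f x = g x" by (rule AE_I2) (simp add: assms(3) cm_space[OF \<mu>])
  then show ?thesis using V_unitary assms(1,2) unfolding unitary_L2_def by blast
qed

lemma aux_c: "(a - 1) * c + (1 - a) * (c::complex) = 0"
  by (simp add: left_diff_distrib)

lemma AE3: "AE x in M. P1 x \<Longrightarrow> AE x in M. P2 x \<Longrightarrow> AE x in M. P3 x \<Longrightarrow> (\<And>x. P1 x \<Longrightarrow> P2 x \<Longrightarrow> P3 x \<Longrightarrow> Q x) \<Longrightarrow> AE x in M. Q x"
  by (erule AE_mp, erule AE_mp, erule AE_mp, rule AE_I2) blast

lemma AE_S1: "AE z in \<mu>\<alpha>. z \<in> S1"
  by (rule AE_I2) (simp add: cm_space[OF \<mu>\<alpha>])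

lemma int_dq: "C1_circle f \<Longrightarrow> z \<in> S1 \<Longrightarrow> integrable \<mu> (dq f z)"
  by (rule cm_int[OF \<mu> dq_cont])

lemma W_cong:
  assumes fg: "\<And>x. x \<in> S1 \<Longrightarrow> f x = g x" and z: "z \<in> S1"
  shows "W f z = W g z"
proof -
  have "(LINT \<xi>|\<mu>. dq f z \<xi>) = (LINT \<xi>|\<mu>. dq g z \<xi>)"
    by (rule Bochner_Integration.integral_cong[OF refl], rule dq_cong[OF fg z]) (simp_all add: cm_space[OF \<mu>])
  then show ?thesis using fg[OF z] by (simp add: W_def)
qed

lemma W_lin:
  assumes f: "C1_circle f" and g: "C1_circle g" and z: "z \<in> S1"
  shows "W (\<lambda>x. a * f x + b * g x) z = a * W f z + b * W g z"
proof -
  have "(LINT \<xi>|\<mu>. dq (\<lambda>x. a * f x + b * g x) z \<xi>) = (LINT \<xi>|\<mu>. a * dq f z \<xi> + b * dq g z \<xi>)"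
    by (rule Bochner_Integration.integral_cong[OF refl]) (rule dq_lin[OF f g z])
  also have "\<dots> = a * (LINT \<xi>|\<mu>. dq f z \<xi>) + b * (LINT \<xi>|\<mu>. dq g z \<xi>)"
    using int_dq[OF f z] int_dq[OF g z] by simp
  finally show ?thesis by (simp add: W_def algebra_simps)
qed

lemma W_shift:
  assumes h: "C1_circle h" and z: "z \<in> S1"
  shows "W (\<lambda>x. x * h x) z = z * W h z + (1 - \<alpha>) * (LINT \<zeta>|\<mu>. h \<zeta> * \<zeta>)"
proof -
  have ih: "integrable \<mu> (\<lambda>\<xi>. \<xi> * h \<xi>)"
    by (rule cm_int[OF \<mu>]) (intro continuous_intros C1_fcont[OF h])
  have "(LINT \<xi>|\<mu>. dq (\<lambda>x. x * h x) z \<xi>) = (LINT \<xi>|\<mu>. z * dq h z \<xi> + \<xi> * h \<xi>)"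
    by (rule Bochner_Integration.integral_cong[OF refl]) (simp add: cm_space[OF \<mu>] dq_shift[OF h z])
  also have "\<dots> = z * (LINT \<xi>|\<mu>. dq h z \<xi>) + (LINT \<xi>|\<mu>. \<xi> * h \<xi>)"
    using int_dq[OF h z] ih by simp
  also have "(LINT \<xi>|\<mu>. \<xi> * h \<xi>) = (LINT \<zeta>|\<mu>. h \<zeta> * \<zeta>)"
    by (simp add: mult.commute)
  finally show ?thesis by (simp add: W_def algebra_simps)
qed

lemma V_shift:
  assumes h: "C1_circle h"
  shows "AE z in \<mu>\<alpha>. V (\<lambda>x. x * h x) z = z * V h z + (1 - \<alpha>) * (LINT \<zeta>|\<mu>. h \<zeta> * \<zeta>)"
proof -
  define c where "c = (LINT \<zeta>|\<mu>. h \<zeta> * \<zeta>)"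
  have L2h: "L2 \<mu> h" by (rule C1_L2[OF \<mu> h])
  have cU: "continuous_on S1 (U_alpha \<mu> \<alpha> h)"
    unfolding U_alpha_def by (intro continuous_intros C1_fcont[OF h])
  have L2U: "L2 \<mu> (U_alpha \<mu> \<alpha> h)" by (rule cm_L2[OF \<mu> cU])
  have L21: "L2 \<mu> (\<lambda>_. 1)" by (rule cm_L2[OF \<mu>]) simp
  have e: "(\<lambda>x. x * h x) = (\<lambda>x. 1 * U_alpha \<mu> \<alpha> h x + (- (\<alpha> - 1) * c) * 1)"
    by (rule ext) (simp add: U_alpha_def c_def aux_c)
  have "AE z in \<mu>\<alpha>. V (\<lambda>x. 1 * U_alpha \<mu> \<alpha> h x + (- (\<alpha> - 1) * c) * 1) z
      = z * V h z + (1 - \<alpha>) * c"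
    using V_lin[OF L2U L21, of 1 "- (\<alpha> - 1) * c"] V_intertw[OF L2h] V_one
  proof eventually_elim
    case (elim z)
    have "V (\<lambda>x. 1 * U_alpha \<mu> \<alpha> h x + (- (\<alpha> - 1) * c) * 1) z
        = 1 * V (U_alpha \<mu> \<alpha> h) z + (- (\<alpha> - 1) * c) * V (\<lambda>_. 1) z" by (rule elim(1))
    also have "\<dots> = z * V h z + (1 - \<alpha>) * c" using elim(2,3) by simp
    finally show ?case .
  qed
  then show ?thesis unfolding e c_def .
qed

lemma good_cong:
  assumes "L2 \<mu> f" "L2 \<mu> g" "\<And>x. x \<in> S1 \<Longrightarrow> f x = g x" "good f"
  shows "good g"
  unfolding good_def
proof (rule AE3[OF V_cong[OF assms(1,2,3)] assms(4)[unfolded good_def] AE_S1])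
  fix z assume a: "V f z = V g z" "V f z = W f z" "z \<in> S1"
  have "W f z = W g z" by (rule W_cong[OF assms(3) a(3)])
  then show "V g z = W g z" using a(1,2) by simp
qed

lemma good_one: "good (\<lambda>_. 1)"
  unfolding good_def using V_one AE_S1
  by eventually_elim (simp add: W_def dq_const)

lemma good_lin:
  assumes f: "C1_circle f" and g: "C1_circle g" and gf: "good f" and gg: "good g"
  shows "good (\<lambda>x. a * f x + b * g x)"
  using V_lin[OF C1_L2[OF \<mu> f] C1_L2[OF \<mu> g], of a b] gf gg AE_S1 unfolding good_def
  by eventually_elim (simp add: W_lin[OF f g])

lemma good_shift:
  assumes h: "C1_circle h" and gh: "good h"
  shows "good (\<lambda>x. x * h x)"
  using V_shift[OF h] gh AE_S1 unfolding good_def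
  by eventually_elim (simp add: W_shift[OF h])

lemma good_unshift:
  assumes h: "C1_circle h" and gh: "good (\<lambda>x. x * h x)"
  shows "good h"
  using V_shift[OF h] gh AE_S1 unfolding good_def
proof eventually_elim
  case (elim z)
  have z0: "z \<noteq> 0" using elim by auto
  show ?case using elim z0 by (simp add: W_shift[OF h])
qed

lemma good_pow: "good (\<lambda>x. x ^ n)"
proof (induction n)
  case 0
  then show ?case using good_one by simp
next
  case (Suc n)
  have "good (\<lambda>x. x * x ^ n)" by (rule good_shift[OF C1_circle_pow Suc.IH])
  then show ?case by simp
qed

lemma good_powi_neg: "good (\<lambda>x. x powi (- int m))"
proof (induction m)
  case 0
  then show ?case using good_one by simp
next
  case (Suc m)
  have "good (\<lambda>x. x * x powi (- int (Suc m)))"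
  proof (rule good_cong[OF _ _ _ Suc.IH])
    show "L2 \<mu> (\<lambda>x. x powi (- int m))" by (rule C1_L2[OF \<mu> C1_circle_powi])
    show "L2 \<mu> (\<lambda>x. x * x powi (- int (Suc m)))" by (rule C1_L2[OF \<mu> C1_circle_shift[OF C1_circle_powi]])
    fix x :: complex assume "x \<in> S1"
    then have x: "x \<noteq> 0" by auto
    have "x * x powi (- int (Suc m)) = x powi 1 * x powi (- int (Suc m))" by simp
    also have "\<dots> = x powi (1 + - int (Suc m))" by (rule power_int_add[symmetric]) (use x in simp)
    also have "1 + - int (Suc m) = - int m" by simp
    finally show "x powi (- int m) = x * x powi (- int (Suc m))" by simp
  qed
  then show ?case by (rule good_unshift[OF C1_circle_powi])
qed

lemma good_powi: "good (\<lambda>x. x powi n)"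
proof (cases "n \<ge> 0")
  case True
  then obtain m where m: "n = int m" using nonneg_int_cases by blast
  show ?thesis using good_pow[of m] by (simp add: m)
next
  case False
  then have n: "n = - int (nat (- n))" by simp
  show ?thesis using good_powi_neg[of "nat (- n)"] by (subst n)
qed

lemma good_lpoly: "good (lpoly L)"
proof (induction L)
  case Nil
  have "good (\<lambda>x. 0 * 1 + 0 * 1)" by (rule good_lin[OF C1_circle_const C1_circle_const good_one good_one])
  moreover have "lpoly [] = (\<lambda>x. 0 * 1 + 0 * 1)" by (rule ext) simp
  ultimately show ?case by simp
next
  case (Cons p L)
  obtain c n where p: "p = (c, n)" by (cases p)
  have "good (\<lambda>x. c * x powi n + 1 * lpoly L x)"
    by (rule good_lin[OF C1_circle_powi C1_lpoly good_powi Cons.IH])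
  moreover have "lpoly (p # L) = (\<lambda>x. c * x powi n + 1 * lpoly L x)" by (rule ext) (simp add: p)
  ultimately show ?case by simp
qed

end


lemma lpoly_append [simp]: "lpoly (K1 @ K2) w = lpoly K1 w + lpoly K2 w"
  by (simp add: lpoly_def)

lemma lpoly_scale: "lpoly (map (\<lambda>(c, n). (a * c, n)) L) w = a * lpoly L w"
proof (induction L)
  case Nil then show ?case by simp
next
  case (Cons p L)
  obtain c n where p: "p = (c, n)" by (cases p)
  show ?case using Cons by (simp add: p algebra_simps)
qed

definition lprod :: "(complex \<times> int) list \<Rightarrow> (complex \<times> int) list \<Rightarrow> (complex \<times> int) list" where
  "lprod K1 K2 = concat (map (\<lambda>(c, n). map (\<lambda>(d, m). (c * d, n + m)) K2) K1)"

lemma lpoly_mono_mult: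
  assumes w: "w \<noteq> 0"
  shows "lpoly (map (\<lambda>(d, m). (c * d, n + m)) K2) w = c * w powi n * lpoly K2 w"
proof (induction K2)
  case Nil then show ?case by simp
next
  case (Cons p L)
  obtain d m where p: "p = (d, m)" by (cases p)
  have "w powi (n + m) = w powi n * w powi m" by (rule power_int_add) (use w in simp)
  then show ?case using Cons by (simp add: p algebra_simps)
qed

lemma lpoly_lprod:
  assumes w: "w \<noteq> 0"
  shows "lpoly (lprod K1 K2) w = lpoly K1 w * lpoly K2 w"
proof (induction K1)
  case Nil then show ?case by (simp add: lprod_def)
next
  case (Cons p L)
  obtain c n where p: "p = (c, n)" by (cases p)
  have "lprod (p # L) K2 = map (\<lambda>(d, m). (c * d, n + m)) K2 @ lprod L K2"
    by (simp add: lprod_def p)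
  then show ?case using Cons lpoly_mono_mult[OF w, of c n K2] by (simp add: p algebra_simps)
qed

lemma S1_cnj: assumes w: "w \<in> S1" shows "cnj w = w powi (-1)"
proof -
  have "w * cnj w = 1" using S1_cnj_mult[OF w] by (simp add: mult.commute)
  then have "inverse w = cnj w" by (rule inverse_unique)
  then show ?thesis by (simp add: power_int_minus)
qed

lemma rpoly_lpoly:
  fixes p :: "complex \<Rightarrow> real"
  assumes "real_polynomial_function p"
  shows "\<exists>L. \<forall>w\<in>S1. complex_of_real (p w) = lpoly L w"
  using assms
proof (induction p rule: real_polynomial_function.induct)
  case (linear p)
  interpret L: bounded_linear p by fact
  define A where "A = (complex_of_real (p 1) - \<i> * complex_of_real (p \<i>)) / 2"
  define B where "B = (complex_of_real (p 1) + \<i> * complex_of_real (p \<i>)) / 2"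
  show ?case
  proof (intro exI ballI)
    fix w :: complex assume w: "w \<in> S1"
    have "w = Re w *\<^sub>R 1 + Im w *\<^sub>R \<i>" by (simp add: complex_eq_iff)
    then have "p w = p (Re w *\<^sub>R 1 + Im w *\<^sub>R \<i>)" by simp
    also have "\<dots> = Re w * p 1 + Im w * p \<i>" by (simp add: L.add L.scaleR)
    finally have pw: "p w = Re w * p 1 + Im w * p \<i>" .
    have re: "complex_of_real (Re w) = (w + cnj w) / 2" by (simp add: complex_add_cnj)
    have im: "complex_of_real (Im w) = - \<i> * (w - cnj w) / 2" by (simp add: complex_eq_iff)
    have "complex_of_real (p w) = A * w + B * cnj w"
      unfolding pw A_def B_def of_real_add of_real_mult re im
      by (simp add: field_simps)
    also have "\<dots> = lpoly [(A, 1), (B, -1)] w" using S1_cnj[OF w] by simp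
    finally show "complex_of_real (p w) = lpoly [(A, 1), (B, -1)] w" .
  qed
next
  case (const c)
  show ?case by (rule exI[of _ "[(complex_of_real c, 0)]"]) simp
next
  case (add f g)
  then obtain K1 K2 where "\<forall>w\<in>S1. complex_of_real (f w) = lpoly K1 w" "\<forall>w\<in>S1. complex_of_real (g w) = lpoly K2 w"
    by blast
  then show ?case by (intro exI[of _ "K1 @ K2"]) simp
next
  case (mult f g)
  then obtain K1 K2 where "\<forall>w\<in>S1. complex_of_real (f w) = lpoly K1 w" "\<forall>w\<in>S1. complex_of_real (g w) = lpoly K2 w"
    by blast
  show ?case
  proof (intro exI[of _ "lprod K1 K2"] ballI)
    fix w :: complex assume w: "w \<in> S1"
    then have "w \<noteq> 0" by auto
    then show "complex_of_real (f w * g w) = lpoly (lprod K1 K2) w"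
      using \<open>\<forall>w\<in>S1. complex_of_real (f w) = lpoly K1 w\<close> \<open>\<forall>w\<in>S1. complex_of_real (g w) = lpoly K2 w\<close> w
      by (simp add: lpoly_lprod)
  qed
qed

definition Aint :: "(complex \<times> int) list \<Rightarrow> (complex \<times> int) list" where
  "Aint L = map (\<lambda>(c, n). (c / of_int (n + 1), n + 1)) (filter (\<lambda>(c, n). n \<noteq> -1) L)"

definition dres :: "(complex \<times> int) list \<Rightarrow> complex" where
  "dres L = sum_list (map fst (filter (\<lambda>(c, n). n = -1) L))"

lemma deriv_mono:
  "((\<lambda>t. c * cis t powi k) has_vector_derivative (\<i> * of_int k * c * cis t powi k)) (at t)"
proof -
  have "((\<lambda>t. cis (of_int k * t)) has_vector_derivative (\<i> * of_real (of_int k) * cis (of_int k * t))) (at t)"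
    by (rule cis_deriv)
  from has_vector_derivative_mult_right[OF this, of c]
  have d: "((\<lambda>t. c * cis (of_int k * t)) has_vector_derivative (c * (\<i> * of_real (of_int k) * cis (of_int k * t)))) (at t)" .
  have e1: "(\<lambda>t. c * cis t powi k) = (\<lambda>t. c * cis (of_int k * t))" by (simp add: cis_powi)
  have e2: "\<i> * of_int k * c * cis t powi k = c * (\<i> * of_real (of_int k) * cis (of_int k * t))"
    by (simp add: cis_powi ac_simps)
  show ?thesis unfolding e1 e2 by (rule d)
qed

lemma deriv_Aint:
  "((\<lambda>t. lpoly (Aint L) (cis t)) has_vector_derivative (\<i> * cis t * lpoly L (cis t) - \<i> * dres L)) (at t)"
proof (induction L)
  case Nil
  show ?case by (simp add: Aint_def dres_def)
next
  case (Cons p L)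
  obtain c n where p: "p = (c, n)" by (cases p)
  have cz: "cis t \<noteq> 0" by simp
  have lp: "lpoly (p # L) w = c * w powi n + lpoly L w" for w by (simp add: p)
  show ?case
  proof (cases "n = -1")
    case True
    have e1: "Aint (p # L) = Aint L" by (simp add: Aint_def p True)
    have e2: "dres (p # L) = c + dres L" by (simp add: dres_def p True)
    have "cis t * cis t powi (-1) = 1" using cz by (simp add: power_int_minus cis_mult)
    then have "\<i> * cis t * lpoly (p # L) (cis t) - \<i> * dres (p # L)
        = \<i> * cis t * lpoly L (cis t) - \<i> * dres L"
      by (simp add: lp True e2 algebra_simps)
    then show ?thesis using Cons.IH by (simp add: e1)
  next
    case False
    have n1: "of_int (n + 1) \<noteq> (0::complex)"
    proof
      assume "of_int (n + 1) = (0::complex)"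
      then have "n + 1 = 0" by (simp only: of_int_eq_0_iff)
      with False show False by simp
    qed
    have e1: "Aint (p # L) = (c / of_int (n + 1), n + 1) # Aint L" by (simp add: Aint_def p False)
    have e2: "dres (p # L) = dres L" by (simp add: dres_def p False)
    have d1: "((\<lambda>t. c / of_int (n + 1) * cis t powi (n + 1)) has_vector_derivative
        (\<i> * of_int (n + 1) * (c / of_int (n + 1)) * cis t powi (n + 1))) (at t)"
      by (rule deriv_mono)
    have pw0: "cis t powi (n + 1) = cis t powi n * cis t powi 1" by (rule power_int_add) (use cz in simp)
    then have pw: "cis t powi (n + 1) = cis t powi n * cis t" by simp
    have "\<i> * of_int (n + 1) * (c / of_int (n + 1)) * cis t powi (n + 1) = \<i> * cis t * (c * cis t powi n)"
      using n1 by (simp add: pw)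
    with d1 have d1': "((\<lambda>t. c / of_int (n + 1) * cis t powi (n + 1)) has_vector_derivative
        (\<i> * cis t * (c * cis t powi n))) (at t)" by simp
    have "((\<lambda>t. c / of_int (n + 1) * cis t powi (n + 1) + lpoly (Aint L) (cis t)) has_vector_derivative
        (\<i> * cis t * (c * cis t powi n) + (\<i> * cis t * lpoly L (cis t) - \<i> * dres L))) (at t)"
      by (rule has_vector_derivative_add[OF d1' Cons.IH])
    moreover have "\<i> * cis t * (c * cis t powi n) + (\<i> * cis t * lpoly L (cis t) - \<i> * dres L)
        = \<i> * cis t * lpoly (p # L) (cis t) - \<i> * dres (p # L)"
      by (simp add: lp e2 algebra_simps)
    ultimately show ?thesis by (simp add: e1)
  qed
qed


lemma iw_cancel: "cnj w * w = 1 \<Longrightarrow> \<i> * w * (- \<i> * cnj w * X) = X"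
proof -
  assume a: "cnj w * w = 1"
  have "\<i> * w * (- \<i> * cnj w * X) = (- (\<i> * \<i>)) * (cnj w * w) * X" by algebra
  also have "\<dots> = X" using a by simp
  finally show ?thesis .
qed

lemma cis_2pi': "cis (2 * pi) = 1" by (simp add: complex_eq_iff)

lemma ofreal_deriv: "((\<lambda>t. a * complex_of_real t) has_vector_derivative a) (at t)"
proof -
  have "((\<lambda>z. a * z) has_field_derivative a) (at (complex_of_real t))" by (rule DERIV_cmult_Id)
  from has_vector_derivative_real_field[OF this] show ?thesis .
qed

lemma approx:
  assumes f: "C1_circle f" and e: "0 < \<epsilon>"
  shows "\<exists>L. (\<forall>w\<in>S1. norm (f w - lpoly L w) \<le> 4 * \<epsilon>) \<and> (\<forall>t. norm (Dc (\<lambda>w. f w - lpoly L w) t) \<le> \<epsilon>)"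
proof -
  define g where "g = (\<lambda>t. f (cis t))"
  define D where "D = Dc f"
  have dg: "(g has_vector_derivative D t) (at t)" for t
    unfolding g_def D_def by (rule C1_D[OF f])
  define \<Phi> where "\<Phi> = (\<lambda>w. - \<i> * cnj w * D (Arg w))"
  have cD: "continuous_on S1 (\<lambda>w. D (Arg w))"
    unfolding D_def by (rule lift_cont[OF C1_Dcont[OF f]]) (rule Dc_inv[OF f])
  have c\<Phi>: "continuous_on S1 \<Phi>" unfolding \<Phi>_def using cD by (intro continuous_intros)
  have cRe: "continuous_on S1 (\<lambda>w. Re (\<Phi> w))" using c\<Phi> by (intro continuous_intros)
  have cIm: "continuous_on S1 (\<lambda>w. Im (\<Phi> w))" using c\<Phi> by (intro continuous_intros)
  have e4: "0 < \<epsilon> / 4" using e by simp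
  obtain pr where pr: "real_polynomial_function pr" "\<And>w. w \<in> S1 \<Longrightarrow> \<bar>Re (\<Phi> w) - pr w\<bar> < \<epsilon> / 4"
    using Stone_Weierstrass_real_polynomial_function[OF compact_sphere cRe e4] by blast
  obtain pim where pim: "real_polynomial_function pim" "\<And>w. w \<in> S1 \<Longrightarrow> \<bar>Im (\<Phi> w) - pim w\<bar> < \<epsilon> / 4"
    using Stone_Weierstrass_real_polynomial_function[OF compact_sphere cIm e4] by blast
  obtain Lr where Lr: "\<forall>w\<in>S1. complex_of_real (pr w) = lpoly Lr w" using rpoly_lpoly[OF pr(1)] by blast
  obtain Li where Li: "\<forall>w\<in>S1. complex_of_real (pim w) = lpoly Li w" using rpoly_lpoly[OF pim(1)] by blast
  define LQ where "LQ = Lr @ map (\<lambda>(c, n). (\<i> * c, n)) Li"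
  have Qapprox: "norm (\<Phi> w - lpoly LQ w) \<le> \<epsilon> / 2" if w: "w \<in> S1" for w
  proof -
    have "lpoly LQ w = complex_of_real (pr w) + \<i> * complex_of_real (pim w)"
      using Lr Li w by (simp add: LQ_def lpoly_scale)
    then have "\<Phi> w - lpoly LQ w = complex_of_real (Re (\<Phi> w) - pr w) + \<i> * complex_of_real (Im (\<Phi> w) - pim w)"
      by (simp add: complex_eq_iff)
    then have "norm (\<Phi> w - lpoly LQ w) \<le> norm (complex_of_real (Re (\<Phi> w) - pr w)) + norm (\<i> * complex_of_real (Im (\<Phi> w) - pim w))"
      by (simp only: norm_triangle_ineq)
    also have "\<dots> = \<bar>Re (\<Phi> w) - pr w\<bar> + \<bar>Im (\<Phi> w) - pim w\<bar>" by (simp add: norm_mult del: of_real_diff)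
    also have "\<dots> \<le> \<epsilon> / 2" using pr(2)[OF w] pim(2)[OF w] by simp
    finally show ?thesis .
  qed
  define P0 where "P0 = Aint LQ"
  define d where "d = dres LQ"
  define p where "p = (\<lambda>t. lpoly P0 (cis t))"
  have dp: "(p has_vector_derivative (\<i> * cis t * lpoly LQ (cis t) - \<i> * d)) (at t)" for t
    unfolding p_def P0_def d_def by (rule deriv_Aint)
  have D\<Phi>: "D t = \<i> * cis t * \<Phi> (cis t)" for t
  proof -
    have "D (Arg (cis t)) = D t" unfolding D_def by (rule Dc_inv[OF f]) (simp add: cis_Arg_S1)
    moreover have "cnj (cis t) * cis t = 1" by (rule S1_cnj_mult) simp
    ultimately show ?thesis unfolding \<Phi>_def using iw_cancel[of "cis t" "D t"] by simp
  qed
  define e' where "e' = (\<lambda>t. p t - g t + (\<i> * d) * complex_of_real t)"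
  have de: "(e' has_vector_derivative (\<i> * cis t * (lpoly LQ (cis t) - \<Phi> (cis t)))) (at t)" for t
  proof -
    have "(e' has_vector_derivative ((\<i> * cis t * lpoly LQ (cis t) - \<i> * d) - D t + \<i> * d)) (at t)"
      unfolding e'_def
      by (rule has_vector_derivative_add[OF has_vector_derivative_diff[OF dp dg] ofreal_deriv])
    moreover have "(\<i> * cis t * lpoly LQ (cis t) - \<i> * d) - D t + \<i> * d = \<i> * cis t * (lpoly LQ (cis t) - \<Phi> (cis t))"
      by (simp add: D\<Phi> algebra_simps)
    ultimately show ?thesis by simp
  qed
  have bde: "norm (\<i> * cis t * (lpoly LQ (cis t) - \<Phi> (cis t))) \<le> \<epsilon> / 2" for t
  proof -
    have "norm (\<i> * cis t * (lpoly LQ (cis t) - \<Phi> (cis t))) = norm (\<Phi> (cis t) - lpoly LQ (cis t))"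
      by (simp add: norm_mult norm_minus_commute)
    also have "\<dots> \<le> \<epsilon> / 2" by (rule Qapprox) simp
    finally show ?thesis .
  qed
  have mv: "norm (e' (2 * pi) - e' 0) \<le> \<epsilon> / 2 * \<bar>2 * pi - 0\<bar>"
    by (rule mvt_bound[OF de bde])
  have "e' (2 * pi) - e' 0 = \<i> * d * complex_of_real (2 * pi)"
    by (simp add: e'_def p_def g_def cis_2pi')
  then have "norm d * (2 * pi) \<le> \<epsilon> / 2 * (2 * pi)" using mv by (simp add: norm_mult)
  then have nd: "norm d \<le> \<epsilon> / 2" using pi_gt_zero by simp
  define L where "L = (g 0 - p 0, 0) # P0"
  define h where "h = (\<lambda>w. f w - lpoly L w)"
  have hc: "h (cis t) = g t - (g 0 - p 0) - p t" for t by (simp add: h_def L_def g_def p_def)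
  have C1h: "C1_circle h"
  proof -
    have "h = (\<lambda>w. 1 * f w + (-1) * lpoly L w)" by (rule ext) (simp add: h_def)
    then show ?thesis using C1_circle_lin[OF f C1_lpoly, of 1 "-1" L] by simp
  qed
  have dh0: "((\<lambda>t. g t - (g 0 - p 0) - p t) has_vector_derivative (D t - 0 - (\<i> * cis t * lpoly LQ (cis t) - \<i> * d))) (at t)" for t
    by (rule has_vector_derivative_diff[OF has_vector_derivative_diff[OF dg has_vector_derivative_const] dp])
  have dh: "((\<lambda>t. h (cis t)) has_vector_derivative (D t - (\<i> * cis t * lpoly LQ (cis t) - \<i> * d))) (at t)" for t
    using dh0[of t] by (simp add: hc)
  have Dh: "Dc h t = D t - (\<i> * cis t * lpoly LQ (cis t) - \<i> * d)" for t
    by (rule vector_derivative_unique_at[OF C1_D[OF C1h] dh])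
  have bDh: "norm (Dc h t) \<le> \<epsilon>" for t
  proof -
    have "Dc h t = \<i> * cis t * (\<Phi> (cis t) - lpoly LQ (cis t)) + \<i> * d"
      by (simp add: Dh D\<Phi> algebra_simps)
    then have "norm (Dc h t) \<le> norm (\<i> * cis t * (\<Phi> (cis t) - lpoly LQ (cis t))) + norm (\<i> * d)"
      by (simp only: norm_triangle_ineq)
    also have "\<dots> = norm (\<Phi> (cis t) - lpoly LQ (cis t)) + norm d" by (simp add: norm_mult)
    also have "\<dots> \<le> \<epsilon> / 2 + \<epsilon> / 2" using Qapprox[of "cis t"] nd by simp
    finally show ?thesis by simp
  qed
  have bh: "norm (h w) \<le> 4 * \<epsilon>" if w: "w \<in> S1" for w
  proof -
    have h0: "h (cis 0) = 0" using hc[of 0] by simp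
    have "norm (h (cis (Arg w)) - h (cis 0)) \<le> \<epsilon> * \<bar>Arg w - 0\<bar>"
      by (rule mvt_bound[OF dh]) (use bDh Dh in simp)
    then have "norm (h w) \<le> \<epsilon> * \<bar>Arg w\<bar>" using h0 cis_Arg_S1[OF w] by simp
    also have "\<dots> \<le> \<epsilon> * 4"
    proof -
      have "\<bar>Arg w\<bar> \<le> pi" using Arg_bounded[of w] by (simp add: abs_le_iff)
      then have "\<bar>Arg w\<bar> \<le> 4" using pi_less_4 by simp
      then show ?thesis using e by (simp add: mult_left_mono)
    qed
    finally show ?thesis by simp
  qed
  show ?thesis
    by (rule exI[of _ L]) (use bh bDh in \<open>simp add: h_def\<close>)
qed


context setting
begin

lemma L2_norm_int:
  assumes "L2 M h"
  shows "integrable M (\<lambda>x. (norm (h x))\<^sup>2)"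
  using assms by (simp add: L2_def)

lemma inner_self_real: "L2_inner M h h = complex_of_real (LINT x|M. (norm (h x))\<^sup>2)"
proof -
  have e: "(\<lambda>x. h x * cnj (h x)) = (\<lambda>x. complex_of_real ((norm (h x))\<^sup>2))"
    by (rule ext) (rule complex_norm_square[symmetric])
  show ?thesis by (simp only: L2_inner_def e integral_complex_of_real)
qed

lemma V_norm_int:
  assumes h: "L2 \<mu> h"
  shows "(LINT z|\<mu>\<alpha>. (norm (V h z))\<^sup>2) = (LINT x|\<mu>. (norm (h x))\<^sup>2)"
  using V_iso[OF h h] by (simp add: inner_self_real)

lemma W_bound:
  assumes h: "C1_circle h" and B: "\<And>t. norm (Dc h t) \<le> B" and hb: "\<And>w. w \<in> S1 \<Longrightarrow> norm (h w) \<le> C"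
    and z: "z \<in> S1"
  shows "norm (W h z) \<le> C + 2 * (3 * B)"
proof -
  interpret P: prob_space \<mu> by (rule cm_prob[OF \<mu>])
  have ii: "integrable \<mu> (dq h z)" by (rule int_dq[OF h z])
  have "norm (LINT \<xi>|\<mu>. dq h z \<xi>) \<le> (LINT \<xi>|\<mu>. norm (dq h z \<xi>))" by (rule integral_norm_bound)
  also have "\<dots> \<le> 3 * B"
  proof (rule P.integral_le_const)
    show "integrable \<mu> (\<lambda>\<xi>. norm (dq h z \<xi>))" using ii by (rule integrable_norm)
    show "AE \<xi> in \<mu>. norm (dq h z \<xi>) \<le> 3 * B"
      by (rule AE_I2) (simp add: cm_space[OF \<mu>] dq_bound[OF h B z])
  qed
  finally have i3: "norm (LINT \<xi>|\<mu>. dq h z \<xi>) \<le> 3 * B" .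
  have a2: "norm (1 - \<alpha>) \<le> 2" using norm_triangle_ineq4[of 1 \<alpha>] \<alpha> by simp
  have "norm (W h z) \<le> norm (h z) + norm (1 - \<alpha>) * norm (LINT \<xi>|\<mu>. dq h z \<xi>)"
    unfolding W_def by (rule order_trans[OF norm_triangle_ineq]) (simp add: norm_mult)
  also have "\<dots> \<le> C + 2 * (3 * B)"
    using hb[OF z] a2 i3 by (intro add_mono mult_mono) auto
  finally show ?thesis .
qed

lemma main:
  assumes f: "C1_circle f"
  shows "AE z in \<mu>\<alpha>. V f z = W f z"
proof -
  define \<epsilon> where "\<epsilon> = (\<lambda>k::nat. (1 / 2 :: real) ^ k)"
  have \<epsilon>pos: "0 < \<epsilon> k" for k by (simp add: \<epsilon>_def)
  have "\<forall>k. \<exists>L. (\<forall>w\<in>S1. norm (f w - lpoly L w) \<le> 4 * \<epsilon> k) \<and> (\<forall>t. norm (Dc (\<lambda>w. f w - lpoly L w) t) \<le> \<epsilon> k)"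
    using approx[OF f \<epsilon>pos] by blast
  then obtain L where L: "\<And>k. (\<forall>w\<in>S1. norm (f w - lpoly (L k) w) \<le> 4 * \<epsilon> k) \<and> (\<forall>t. norm (Dc (\<lambda>w. f w - lpoly (L k) w) t) \<le> \<epsilon> k)"
    by metis
  define h where "h = (\<lambda>k w. f w - lpoly (L k) w)"
  have C1h: "C1_circle (h k)" for k
  proof -
    have "h k = (\<lambda>w. 1 * f w + (-1) * lpoly (L k) w)" by (rule ext) (simp add: h_def)
    then show ?thesis using C1_circle_lin[OF f C1_lpoly, of 1 "-1" "L k"] by simp
  qed
  have hb: "\<And>w. w \<in> S1 \<Longrightarrow> norm (h k w) \<le> 4 * \<epsilon> k" for k using L[of k] by (simp add: h_def)
  have Db: "\<And>t. norm (Dc (h k) t) \<le> \<epsilon> k" for k using L[of k] by (simp add: h_def)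
  have L2h: "L2 \<mu> (h k)" for k by (rule C1_L2[OF \<mu> C1h])
  have L2f: "L2 \<mu> f" by (rule C1_L2[OF \<mu> f])
  have L2p: "L2 \<mu> (lpoly (L k))" for k by (rule C1_L2[OF \<mu> C1_lpoly])
  have fdec: "f = (\<lambda>x. 1 * lpoly (L k) x + 1 * h k x)" for k by (rule ext) (simp add: h_def)
  have est: "AE z in \<mu>\<alpha>. norm (V f z - W f z) \<le> norm (V (h k) z) + 10 * \<epsilon> k" for k
  proof -
    have v: "AE z in \<mu>\<alpha>. V f z = 1 * V (lpoly (L k)) z + 1 * V (h k) z"
      using V_lin[OF L2p[of k] L2h[of k], of 1 1] by (subst fdec[of k]) simp
    have g: "AE z in \<mu>\<alpha>. V (lpoly (L k)) z = W (lpoly (L k)) z"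
      using good_lpoly[of "L k"] unfolding good_def .
    show ?thesis
    proof (rule AE3[OF v g AE_S1])
      fix z assume a: "V f z = 1 * V (lpoly (L k)) z + 1 * V (h k) z"
        "V (lpoly (L k)) z = W (lpoly (L k)) z" "z \<in> S1"
      have wf: "W f z = 1 * W (lpoly (L k)) z + 1 * W (h k) z"
        by (subst fdec[of k]) (rule W_lin[OF C1_lpoly C1h a(3)])
      have "V f z - W f z = V (h k) z - W (h k) z" using a(1,2) wf by simp
      then have "norm (V f z - W f z) \<le> norm (V (h k) z) + norm (W (h k) z)"
        by (simp add: norm_triangle_ineq4)
      also have "\<dots> \<le> norm (V (h k) z) + (4 * \<epsilon> k + 2 * (3 * \<epsilon> k))"
        using W_bound[OF C1h Db hb a(3)] by simp
      finally show "norm (V f z - W f z) \<le> norm (V (h k) z) + 10 * \<epsilon> k" by simp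
    qed
  qed
  have estall: "AE z in \<mu>\<alpha>. \<forall>k. norm (V f z - W f z) \<le> norm (V (h k) z) + 10 * \<epsilon> k"
    using est by (simp add: AE_all_countable)
  interpret Pa: prob_space \<mu>\<alpha> by (rule cm_prob[OF \<mu>\<alpha>])
  interpret P: prob_space \<mu> by (rule cm_prob[OF \<mu>])
  have mV [measurable]: "V (h k) \<in> borel_measurable \<mu>\<alpha>" for k
    using V_L2[OF L2h] by (simp add: L2_def)
  define F where "F = (\<lambda>k z. ennreal ((norm (V (h k) z))\<^sup>2))"
  have mF [measurable]: "F k \<in> borel_measurable \<mu>\<alpha>" for k unfolding F_def by measurable
  have intF: "(\<integral>\<^sup>+ z. F k z \<partial>\<mu>\<alpha>) \<le> ennreal (16 * (1 / 4) ^ k)" for k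
  proof -
    have "(\<integral>\<^sup>+ z. F k z \<partial>\<mu>\<alpha>) = ennreal (LINT z|\<mu>\<alpha>. (norm (V (h k) z))\<^sup>2)"
      unfolding F_def by (rule nn_integral_eq_integral[OF L2_norm_int[OF V_L2[OF L2h]]]) simp
    also have "(LINT z|\<mu>\<alpha>. (norm (V (h k) z))\<^sup>2) = (LINT x|\<mu>. (norm (h k x))\<^sup>2)"
      by (rule V_norm_int[OF L2h])
    also have "(LINT x|\<mu>. (norm (h k x))\<^sup>2) \<le> (4 * \<epsilon> k)\<^sup>2"
    proof (rule P.integral_le_const)
      show "integrable \<mu> (\<lambda>x. (norm (h k x))\<^sup>2)" by (rule L2_norm_int[OF L2h])
      show "AE x in \<mu>. (norm (h k x))\<^sup>2 \<le> (4 * \<epsilon> k)\<^sup>2"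
      proof (rule AE_I2)
        fix x assume "x \<in> space \<mu>"
        then have "x \<in> S1" by (simp add: cm_space[OF \<mu>])
        then have "norm (h k x) \<le> 4 * \<epsilon> k" using hb by blast
        then show "(norm (h k x))\<^sup>2 \<le> (4 * \<epsilon> k)\<^sup>2" by (rule power_mono) simp
      qed
    qed
    also have "(4 * \<epsilon> k)\<^sup>2 = 16 * (1 / 4) ^ k"
      by (simp add: \<epsilon>_def power2_eq_square power_mult_distrib[symmetric])
    finally show ?thesis by (simp add: ennreal_leI)
  qed
  have sg: "summable (\<lambda>k. 16 * (1 / 4 :: real) ^ k)"
    by (intro summable_mult summable_geometric) simp
  have "(\<integral>\<^sup>+ z. (\<Sum>k. F k z) \<partial>\<mu>\<alpha>) = (\<Sum>k. \<integral>\<^sup>+ z. F k z \<partial>\<mu>\<alpha>)"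
    by (rule nn_integral_suminf) (rule mF)
  also have "\<dots> \<le> (\<Sum>k. ennreal (16 * (1 / 4) ^ k))"
    by (rule suminf_le[OF intF]) simp_all
  also have "\<dots> = ennreal (\<Sum>k. 16 * (1 / 4) ^ k)"
    by (rule suminf_ennreal2[OF _ sg]) simp
  also have "\<dots> < \<infinity>" by simp
  finally have fin: "(\<integral>\<^sup>+ z. (\<Sum>k. F k z) \<partial>\<mu>\<alpha>) \<noteq> \<infinity>" by simp
  have "AE z in \<mu>\<alpha>. (\<Sum>k. F k z) \<noteq> \<infinity>"
    by (rule nn_integral_noteq_infinite[OF _ fin]) measurable
  then have conv: "AE z in \<mu>\<alpha>. (\<lambda>k. norm (V (h k) z)) \<longlonglongrightarrow> 0"
  proof (rule AE_mp, intro AE_I2 impI)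
    fix z assume "(\<Sum>k. F k z) \<noteq> \<infinity>"
    then have "summable (\<lambda>k. (norm (V (h k) z))\<^sup>2)"
      unfolding F_def by (intro summable_suminf_not_top) simp_all
    then have "(\<lambda>k. (norm (V (h k) z))\<^sup>2) \<longlonglongrightarrow> 0" by (rule summable_LIMSEQ_zero)
    then have "(\<lambda>k. sqrt ((norm (V (h k) z))\<^sup>2)) \<longlonglongrightarrow> sqrt 0" by (rule tendsto_real_sqrt)
    then show "(\<lambda>k. norm (V (h k) z)) \<longlonglongrightarrow> 0" by simp
  qed
  have e0: "(\<lambda>k. 10 * \<epsilon> k) \<longlonglongrightarrow> 0"
    unfolding \<epsilon>_def by (intro tendsto_mult_right_zero LIMSEQ_power_zero) simp
  show ?thesis
  proof (rule AE3[OF estall conv AE_S1])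
    fix z assume a: "\<forall>k. norm (V f z - W f z) \<le> norm (V (h k) z) + 10 * \<epsilon> k"
      "(\<lambda>k. norm (V (h k) z)) \<longlonglongrightarrow> 0" "z \<in> S1"
    have "(\<lambda>k. norm (V (h k) z) + 10 * \<epsilon> k) \<longlonglongrightarrow> 0 + 0"
      by (rule tendsto_add[OF a(2) e0])
    then have "norm (V f z - W f z) \<le> 0 + 0"
      by (rule LIMSEQ_le_const) (use a(1) in blast)
    then show "V f z = W f z" by simp
  qed
qed

end

theorem theorem2p6:
  fixes \<mu> \<mu>\<alpha> :: "complex measure" and \<alpha> :: complex
    and V :: "(complex \<Rightarrow> complex) \<Rightarrow> (complex \<Rightarrow> complex)"
    and f :: "complex \<Rightarrow> complex"
  assumes \<mu>: "circle_measure \<mu>"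
    and \<alpha>: "norm \<alpha> = 1"
    and \<mu>\<alpha>: "circle_measure \<mu>\<alpha>"
    and spectral: "\<And>n::nat. (LINT z|\<mu>\<alpha>. z ^ n) = L2_inner \<mu> ((U_alpha \<mu> \<alpha> ^^ n) (\<lambda>_. 1)) (\<lambda>_. 1)"
    and V_unitary: "unitary_L2 \<mu> \<mu>\<alpha> V"
    and V_intertw: "\<And>g. L2 \<mu> g \<Longrightarrow> AE z in \<mu>\<alpha>. V (U_alpha \<mu> \<alpha> g) z = z * V g z"
    and V_one: "AE z in \<mu>\<alpha>. V (\<lambda>_. 1) z = 1"
    and f: "C1_circle f"
  shows "AE z in \<mu>\<alpha>. V f z = f z + (1 - \<alpha>) * (LINT \<xi>|\<mu>. dq f z \<xi>)"
proof -
  interpret setting \<mu> \<mu>\<alpha> \<alpha> V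
    using \<mu> \<alpha> \<mu>\<alpha> V_unitary V_intertw V_one by unfold_locales
  show ?thesis using main[OF f] by (simp add: W_def)
qed


end
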